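(* Let $\mathcal H$ be an infinite-dimensional complex Hilbert space and let $\mathcal V_f(\mathcal H)$ be the set of all positive bilinear forms $t$ on $\mathcal H$ with dense domain $D(t)$ such that $D(t)=\mathcal H$ whenever $t$ is bounded. For $t,s\in\mathcal V_f(\mathcal H)$, let $t\oplus s$ be defined if and only if $t$ is bounded, or $s$ is bounded, or $D(t)=D(s)$, and in that case $t\oplus s=t+s$. Then $(\mathcal V_f(\mathcal H);\oplus,o)$ is a generalized effect algebra.
   Context: The inner product is linear in the first argument. A bilinear form $t$ on $\mathcal H$ is a map $t:D(t)\times D(t)\to\mathbb C$, $D(t)$ a dense linear subspace, linear in the first and antilinear in the second argument. $t$ is positive if $t(x,x)\ge0$ for all $x\in D(t)$; bounded if $\sup\{t(x,x)\mid x\in D(t),\|x\|=1\}<\infty$, unbounded otherwise. The sum $t+s$ has domain $D(t)\cap D(s)$ and $(t+s)(x,y)=t(x,y)+s(x,y)$. $o$ denotes the zero form with domain $\mathcal H$. A generalized effect algebra is a structure $(E;\oplus,0)$ with $0\in E$ and a partial binary operation $\oplus$ such that for all $x,y,z\in E$: (i) $x\oplus y=y\oplus x$ if one side is defined; (ii) $(x\oplus y)\oplus z=x\oplus(y\oplus z)$ if one side is defined; (iii) $x\oplus 0$ is defined and equals $x$; (iv) $x\oplus y=x\oplus z$ implies $y=z$; (v) $x\oplus y=0$ implies $x=y=0$. *)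

theory Defs
  imports "HOL-Analysis.Analysis"
begin

class complex_vector = ab_group_add +
  fixes scaleC :: "complex \<Rightarrow> 'a \<Rightarrow> 'a" (infixr "*\<^sub>C" 75)
  assumes scaleC_add_right: "a *\<^sub>C (x + y) = a *\<^sub>C x + a *\<^sub>C y"
    and scaleC_add_left: "(a + b) *\<^sub>C x = a *\<^sub>C x + b *\<^sub>C x"
    and scaleC_scaleC: "a *\<^sub>C (b *\<^sub>C x) = (a * b) *\<^sub>C x"
    and scaleC_one: "1 *\<^sub>C x = x"

class complex_inner = complex_vector + real_normed_vector +
  fixes cinner :: "'a \<Rightarrow> 'a \<Rightarrow> complex"
  assumes scaleR_scaleC: "scaleR r x = complex_of_real r *\<^sub>C x"
    and cinner_add_left: "cinner (x + y) z = cinner x z + cinner y z"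
    and cinner_scaleC_left: "cinner (a *\<^sub>C x) y = a * cinner x y"
    and cinner_commute: "cinner y x = cnj (cinner x y)"
    and cinner_nonneg: "0 \<le> Re (cinner x x)"
    and cinner_eq_zero_iff: "cinner x x = 0 \<longleftrightarrow> x = 0"
    and norm_cinner: "norm x = sqrt (Re (cinner x x))"

class chilbert_space = complex_inner + complete_space

definition cspan :: "'a::complex_vector set \<Rightarrow> 'a set" where
  "cspan S = {(\<Sum>x\<in>F. c x *\<^sub>C x) | F c. finite F \<and> F \<subseteq> S}"

definition infinite_dimensional :: "'a::complex_vector itself \<Rightarrow> bool" where
  "infinite_dimensional _ \<longleftrightarrow> \<not> (\<exists>S::'a set. finite S \<and> cspan S = UNIV)"

definition csubspace :: "'a::complex_vector set \<Rightarrow> bool" where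
  "csubspace D \<longleftrightarrow> 0 \<in> D \<and> (\<forall>x\<in>D. \<forall>y\<in>D. x + y \<in> D) \<and> (\<forall>a. \<forall>x\<in>D. a *\<^sub>C x \<in> D)"

text \<open>A form is represented by its domain together with its values; to make
  equality of forms coincide with equality of pairs, values outside
  domain \<times> domain are normalised to 0.\<close>
type_synonym 'a cform = "'a set \<times> ('a \<Rightarrow> 'a \<Rightarrow> complex)"

definition dom_form :: "'a cform \<Rightarrow> 'a set" where "dom_form t = fst t"
definition app_form :: "'a cform \<Rightarrow> 'a \<Rightarrow> 'a \<Rightarrow> complex" where "app_form t = snd t"

definition is_form :: "'a::chilbert_space cform \<Rightarrow> bool" where
  "is_form t \<longleftrightarrow> (let D = dom_form t; f = app_form t in
     csubspace D \<and> closure D = UNIV \<and>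
     (\<forall>x\<in>D. \<forall>y\<in>D. \<forall>z\<in>D. f (x + y) z = f x z + f y z) \<and>
     (\<forall>a. \<forall>x\<in>D. \<forall>y\<in>D. f (a *\<^sub>C x) y = a * f x y) \<and>
     (\<forall>x\<in>D. \<forall>y\<in>D. \<forall>z\<in>D. f x (y + z) = f x y + f x z) \<and>
     (\<forall>a. \<forall>x\<in>D. \<forall>y\<in>D. f x (a *\<^sub>C y) = cnj a * f x y) \<and>
     (\<forall>x y. (x \<notin> D \<or> y \<notin> D) \<longrightarrow> f x y = 0))"

definition form_positive :: "'a::chilbert_space cform \<Rightarrow> bool" where
  "form_positive t \<longleftrightarrow> (\<forall>x\<in>dom_form t. Im (app_form t x x) = 0 \<and> 0 \<le> Re (app_form t x x))"

definition form_bounded :: "'a::chilbert_space cform \<Rightarrow> bool" where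
  "form_bounded t \<longleftrightarrow> (\<exists>C. \<forall>x\<in>dom_form t. norm x = 1 \<longrightarrow> Re (app_form t x x) \<le> C)"

definition form_sum :: "'a cform \<Rightarrow> 'a cform \<Rightarrow> 'a cform" where
  "form_sum t s = (dom_form t \<inter> dom_form s,
     (\<lambda>x y. if x \<in> dom_form t \<inter> dom_form s \<and> y \<in> dom_form t \<inter> dom_form s
            then app_form t x y + app_form s x y else 0))"

definition zero_form :: "'a cform" where
  "zero_form = (UNIV, (\<lambda>x y. 0))"

definition Vf :: "'a::chilbert_space cform set" where
  "Vf = {t. is_form t \<and> form_positive t \<and> (form_bounded t \<longrightarrow> dom_form t = UNIV)}"

definition Vf_oplus :: "'a::chilbert_space cform \<Rightarrow> 'a cform \<Rightarrow> 'a cform option" where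
  "Vf_oplus t s = (if form_bounded t \<or> form_bounded s \<or> dom_form t = dom_form s
                   then Some (form_sum t s) else None)"

text \<open>A partial operation on E is a map to option (None = undefined), closed in E.
  Axiom (ii): if one side is defined, so is the other and they agree.\<close>
definition gen_effect_algebra :: "'a set \<Rightarrow> ('a \<Rightarrow> 'a \<Rightarrow> 'a option) \<Rightarrow> 'a \<Rightarrow> bool" where
  "gen_effect_algebra E op z \<longleftrightarrow>
     z \<in> E \<and>
     (\<forall>x\<in>E. \<forall>y\<in>E. \<forall>u. op x y = Some u \<longrightarrow> u \<in> E) \<and>
     (\<forall>x\<in>E. \<forall>y\<in>E. op x y = op y x) \<and>
     (\<forall>x\<in>E. \<forall>y\<in>E. \<forall>w\<in>E.
        Option.bind (op x y) (\<lambda>u. op u w) = Option.bind (op y w) (\<lambda>v. op x v)) \<and>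
     (\<forall>x\<in>E. op x z = Some x) \<and>
     (\<forall>x\<in>E. \<forall>y\<in>E. \<forall>w\<in>E. op x y \<noteq> None \<and> op x y = op x w \<longrightarrow> y = w) \<and>
     (\<forall>x\<in>E. \<forall>y\<in>E. op x y = Some z \<longrightarrow> x = z \<and> y = z)"

end

theory Submission
  imports Defs
begin

lemma fs_dom[simp]: "dom_form (form_sum t s) = dom_form t \<inter> dom_form s"
  by (simp add: form_sum_def dom_form_def)

lemma fs_app: "app_form (form_sum t s) a b = (if a \<in> dom_form t \<inter> dom_form s \<and> b \<in> dom_form t \<inter> dom_form s then app_form t a b + app_form s a b else 0)"
  by (simp add: form_sum_def app_form_def dom_form_def)

lemma zf_dom[simp]: "dom_form zero_form = UNIV"
  by (simp add: zero_form_def dom_form_def)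
lemma zf_app[simp]: "app_form zero_form a b = 0"
  by (simp add: zero_form_def app_form_def)

lemma f_sub: "is_form t \<Longrightarrow> csubspace (dom_form t)" by (simp add: is_form_def Let_def)
lemma f_dense: "is_form t \<Longrightarrow> closure (dom_form t) = UNIV" by (simp add: is_form_def Let_def)
lemma f_addL: "is_form t \<Longrightarrow> x \<in> dom_form t \<Longrightarrow> y \<in> dom_form t \<Longrightarrow> z \<in> dom_form t \<Longrightarrow> app_form t (x + y) z = app_form t x z + app_form t y z"
  by (simp add: is_form_def Let_def)
lemma f_addR: "is_form t \<Longrightarrow> x \<in> dom_form t \<Longrightarrow> y \<in> dom_form t \<Longrightarrow> z \<in> dom_form t \<Longrightarrow> app_form t x (y + z) = app_form t x y + app_form t x z"
  by (simp add: is_form_def Let_def)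
lemma f_scL: "is_form t \<Longrightarrow> x \<in> dom_form t \<Longrightarrow> y \<in> dom_form t \<Longrightarrow> app_form t (a *\<^sub>C x) y = a * app_form t x y"
  by (simp add: is_form_def Let_def)
lemma f_scR: "is_form t \<Longrightarrow> x \<in> dom_form t \<Longrightarrow> y \<in> dom_form t \<Longrightarrow> app_form t x (a *\<^sub>C y) = cnj a * app_form t x y"
  by (simp add: is_form_def Let_def)
lemma f_out: "is_form t \<Longrightarrow> x \<notin> dom_form t \<or> y \<notin> dom_form t \<Longrightarrow> app_form t x y = 0"
  by (simp add: is_form_def Let_def)

lemma cs_add: "csubspace D \<Longrightarrow> x \<in> D \<Longrightarrow> y \<in> D \<Longrightarrow> x + y \<in> D" by (simp add: csubspace_def)
lemma cs_sc: "csubspace D \<Longrightarrow> x \<in> D \<Longrightarrow> a *\<^sub>C x \<in> D" by (simp add: csubspace_def)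

lemma form_eqI:
  assumes "is_form t" "is_form s" "dom_form t = dom_form s"
    "\<And>a b. a \<in> dom_form t \<Longrightarrow> b \<in> dom_form t \<Longrightarrow> app_form t a b = app_form s a b"
  shows "t = s"
proof -
  have "app_form t = app_form s"
  proof (intro ext)
    fix a b show "app_form t a b = app_form s a b"
      using assms f_out[of t a b] f_out[of s a b]
      by (cases "a \<in> dom_form t \<and> b \<in> dom_form t") auto
  qed
  then show ?thesis using assms(3) unfolding dom_form_def app_form_def by (simp add: prod_eq_iff)
qed

lemma polar:
  assumes "is_form y" "is_form w" "dom_form y = dom_form w"
    "\<And>z. z \<in> dom_form y \<Longrightarrow> app_form y z z = app_form w z z"
    "a \<in> dom_form y" "b \<in> dom_form y"
  shows "app_form y a b = app_form w a b"
proof -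
  let ?D = "dom_form y"
  have sub: "csubspace ?D" using assms f_sub by blast
  have ab: "a + b \<in> ?D" using sub assms cs_add by blast
  have ib: "\<i> *\<^sub>C b \<in> ?D" using sub assms cs_sc by blast
  have aib: "a + \<i> *\<^sub>C b \<in> ?D" using sub assms ib cs_add by blast
  have exp: "app_form t (u + v) (u + v) = app_form t u u + app_form t u v + app_form t v u + app_form t v v"
    if "is_form t" "u \<in> dom_form t" "v \<in> dom_form t" for t u v
  proof -
    have "u + v \<in> dom_form t" using that f_sub cs_add by blast
    then show ?thesis using that by (simp add: f_addL f_addR)
  qed
  have E1: "app_form y a b + app_form y b a = app_form w a b + app_form w b a"
    using exp[of y a b] exp[of w a b] assms ab by auto
  have E2: "app_form y a (\<i> *\<^sub>C b) + app_form y (\<i> *\<^sub>C b) a = app_form w a (\<i> *\<^sub>C b) + app_form w (\<i> *\<^sub>C b) a"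
    using exp[of y a "\<i> *\<^sub>C b"] exp[of w a "\<i> *\<^sub>C b"] assms aib ib by auto
  have E3: "- \<i> * app_form y a b + \<i> * app_form y b a = - \<i> * app_form w a b + \<i> * app_form w b a"
    using E2 assms by (simp add: f_scL f_scR)
  from E3 have "\<i> * (- \<i> * app_form y a b + \<i> * app_form y b a) = \<i> * (- \<i> * app_form w a b + \<i> * app_form w b a)"
    by simp
  then have E4: "app_form y a b - app_form y b a = app_form w a b - app_form w b a"
    by (simp add: algebra_simps)
  from E1 E4 have "(app_form y a b + app_form y b a) + (app_form y a b - app_form y b a) = (app_form w a b + app_form w b a) + (app_form w a b - app_form w b a)"
    by simp
  then show ?thesis by simp
qed

lemma Vf_D: "t \<in> Vf \<Longrightarrow> is_form t" "t \<in> Vf \<Longrightarrow> form_positive t"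
  "t \<in> Vf \<Longrightarrow> form_bounded t \<Longrightarrow> dom_form t = UNIV"
  by (auto simp: Vf_def)

lemma pos_Re: "t \<in> Vf \<Longrightarrow> x \<in> dom_form t \<Longrightarrow> 0 \<le> Re (app_form t x x)"
  "t \<in> Vf \<Longrightarrow> x \<in> dom_form t \<Longrightarrow> Im (app_form t x x) = 0"
  by (auto simp: Vf_def form_positive_def)

lemma qcont:
  assumes y: "y \<in> Vf" and bd: "form_bounded y"
  shows "isCont (\<lambda>z. Re (app_form y z z)) z0"
proof -
  define f where "f = app_form y"
  define q where "q z = Re (f z z)" for z
  have F: "is_form y" using y Vf_D by blast
  have D: "dom_form y = UNIV" using y bd Vf_D by blast
  have aL: "f (u + v) w = f u w + f v w" for u v w using F D f_addL unfolding f_def by blast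
  have aR: "f w (u + v) = f w u + f w v" for u v w using F D f_addR unfolding f_def by blast
  have sL: "f (a *\<^sub>C u) v = a * f u v" for a u v using F D f_scL unfolding f_def by blast
  have sR: "f u (a *\<^sub>C v) = cnj a * f u v" for a u v using F D f_scR unfolding f_def by blast
  have qpos: "0 \<le> q z" for z using pos_Re(1)[OF y] D unfolding q_def f_def by blast
  obtain C where C: "\<And>x. norm x = 1 \<Longrightarrow> q x \<le> C"
    using bd D unfolding form_bounded_def q_def f_def by blast
  define C' where "C' = max C 0"
  have C'0: "0 \<le> C'" unfolding C'_def by simp
  have rs: "f (r *\<^sub>R u) v = r * f u v" "f u (r *\<^sub>R v) = r * f u v" for r u v
    by (simp_all add: scaleR_scaleC sL sR)
  have qh: "q h \<le> C' * (norm h)\<^sup>2" for h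
  proof (cases "h = 0")
    case True
    have "f 0 0 = f 0 0 + f 0 0" using aL[of 0 0 0] by simp
    then have "f 0 0 = 0" by simp
    then show ?thesis using True C'0 by (simp add: q_def)
  next
    case False
    define n where "n = norm h"
    have n0: "n > 0" using False n_def by simp
    define u where "u = (1 / n) *\<^sub>R h"
    have nu: "norm u = 1" using n0 by (simp add: u_def n_def)
    have hu: "h = n *\<^sub>R u" using n0 by (simp add: u_def)
    have "q h = n * n * q u" unfolding q_def hu by (simp add: rs)
    also have "\<dots> \<le> n * n * C'" using C[OF nu] n0 unfolding C'_def
      by (intro mult_left_mono) auto
    finally show ?thesis by (simp add: n_def power2_eq_square algebra_simps)
  qed
  have expand: "q (z + t *\<^sub>R h) = q z + t * Re (f z h + f h z) + t * t * q h" for z h t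
    unfolding q_def by (simp add: aL aR rs algebra_simps)
  have pb: "\<bar>Re (f z h + f h z)\<bar> * t \<le> q z + t * t * q h" if "t > 0" for z h t
  proof -
    have "0 \<le> q (z + t *\<^sub>R h)" "0 \<le> q (z + (-t) *\<^sub>R h)" using qpos by auto
    then show ?thesis unfolding expand using that by (auto simp: abs_if algebra_simps)
  qed
  have bound: "\<bar>q (z + h) - q z\<bar> \<le> (q z + C') * norm h + C' * (norm h)\<^sup>2" for z h
  proof (cases "h = 0")
    case True then show ?thesis by simp
  next
    case False
    define n where "n = norm h"
    have n0: "n > 0" using False n_def by simp
    define p where "p = Re (f z h + f h z)"
    have e1: "q (z + h) - q z = p + q h" using expand[where z=z and h=h and t=1] by (simp add: p_def)
    have "\<bar>p\<bar> * (1/n) \<le> q z + (1/n) * (1/n) * q h" using pb[where t="1/n" and z=z and h=h] n0 by (simp add: p_def)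
    then have "\<bar>p\<bar> * (1/n) * n \<le> (q z + (1/n) * (1/n) * q h) * n" using n0 by (intro mult_right_mono) auto
    then have "\<bar>p\<bar> \<le> (q z + (1/n) * (1/n) * q h) * n" using n0 by simp
    also have "\<dots> = q z * n + q h / n" using n0 by (simp add: field_simps)
    finally have "\<bar>p\<bar> \<le> q z * n + q h / n" .
    also have "q h / n \<le> C' * n" using qh[of h] n0 by (simp add: n_def divide_le_eq power2_eq_square algebra_simps)
    finally have "\<bar>p\<bar> \<le> q z * n + C' * n" by simp
    then show ?thesis unfolding e1 using qh[of h] qpos[of h] by (simp add: n_def algebra_simps)
  qed
  have "((\<lambda>x. q x - q z0) \<longlongrightarrow> 0) (at z0)"
  proof (rule Lim_null_comparison)
    show "\<forall>\<^sub>F x in at z0. norm (q x - q z0) \<le> (q z0 + C') * norm (x - z0) + C' * (norm (x - z0))\<^sup>2"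
      using bound[of z0] by (intro always_eventually) (metis add.commute diff_add_cancel real_norm_def)
    have "((\<lambda>x. (q z0 + C') * norm (x - z0) + C' * (norm (x - z0))\<^sup>2) \<longlongrightarrow> (q z0 + C') * norm (z0 - z0) + C' * (norm (z0 - z0))\<^sup>2) (at z0)"
      by (intro tendsto_intros)
    then show "((\<lambda>x. (q z0 + C') * norm (x - z0) + C' * (norm (x - z0))\<^sup>2) \<longlongrightarrow> 0) (at z0)" by simp
  qed
  then have "(q \<longlongrightarrow> q z0) (at z0)" by (rule LIM_zero_cancel)
  then show ?thesis unfolding isCont_def q_def f_def .
qed

lemma dense_eq:
  assumes y: "y \<in> Vf" and w: "w \<in> Vf" and hy: "form_bounded y" and hw: "form_bounded w"
    and dn: "closure E = UNIV" and eq: "\<And>a b. a \<in> E \<Longrightarrow> b \<in> E \<Longrightarrow> app_form y a b = app_form w a b"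
  shows "y = w"
proof -
  have Dy: "dom_form y = UNIV" and Dw: "dom_form w = UNIV" using y w hy hw Vf_D by blast+
  have "closed {z. Re (app_form y z z) = Re (app_form w z z)}"
    by (intro closed_Collect_eq continuous_at_imp_continuous_on ballI qcont y w hy hw)
  moreover have "E \<subseteq> {z. Re (app_form y z z) = Re (app_form w z z)}" using eq by auto
  ultimately have "closure E \<subseteq> {z. Re (app_form y z z) = Re (app_form w z z)}"
    by (rule closure_minimal[rotated])
  then have qe: "Re (app_form y z z) = Re (app_form w z z)" for z using dn by auto
  have ze: "app_form y z z = app_form w z z" for z
    using qe[of z] pos_Re(2)[OF y, of z] pos_Re(2)[OF w, of z] Dy Dw by (simp add: complex_eq_iff)
  show ?thesis
    using polar[of y w] Dy Dw ze Vf_D(1)[OF y] Vf_D(1)[OF w] by (intro form_eqI) auto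
qed

lemma fs_comm: "form_sum t s = form_sum s t"
  by (auto simp: form_sum_def Int_commute add.commute intro!: ext)

lemma fs_assoc: "form_sum (form_sum x y) w = form_sum x (form_sum y w)"
  unfolding form_sum_def by (auto simp: dom_form_def app_form_def intro!: ext)

lemma bnd_part:
  assumes "t \<in> Vf" "s \<in> Vf" "form_bounded (form_sum t s)" "dom_form t \<subseteq> dom_form s"
  shows "form_bounded t"
proof -
  obtain C where C: "\<And>x. x \<in> dom_form t \<inter> dom_form s \<Longrightarrow> norm x = 1 \<Longrightarrow> Re (app_form (form_sum t s) x x) \<le> C"
    using assms(3) unfolding form_bounded_def by auto
  have "Re (app_form t x x) \<le> C" if "x \<in> dom_form t" "norm x = 1" for x
    using C[of x] that assms(4) pos_Re(1)[OF assms(2), of x] by (auto simp: fs_app)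
  then show ?thesis unfolding form_bounded_def by blast
qed

lemma bnd_sum_iff:
  assumes t: "t \<in> Vf" and s: "s \<in> Vf" and d: "form_bounded t \<or> form_bounded s \<or> dom_form t = dom_form s"
  shows "form_bounded (form_sum t s) \<longleftrightarrow> form_bounded t \<and> form_bounded s"
proof
  assume b: "form_bounded (form_sum t s)"
  have "form_bounded t"
  proof (cases "form_bounded t")
    case False
    then have "dom_form t \<subseteq> dom_form s" using d Vf_D(3)[OF s] by auto
    then show ?thesis using bnd_part[OF t s b] by blast
  qed
  moreover have "form_bounded s"
  proof (cases "form_bounded s")
    case False
    then have "dom_form s \<subseteq> dom_form t" using d Vf_D(3)[OF t] by auto
    then show ?thesis using bnd_part[OF s t] b fs_comm[of t s] by metis
  qed
  ultimately show "form_bounded t \<and> form_bounded s" ..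
next
  assume "form_bounded t \<and> form_bounded s"
  then obtain C1 C2 where C1: "\<And>x. x \<in> dom_form t \<Longrightarrow> norm x = 1 \<Longrightarrow> Re (app_form t x x) \<le> C1"
    and C2: "\<And>x. x \<in> dom_form s \<Longrightarrow> norm x = 1 \<Longrightarrow> Re (app_form s x x) \<le> C2"
    unfolding form_bounded_def by blast
  have "Re (app_form (form_sum t s) x x) \<le> C1 + C2" if "x \<in> dom_form (form_sum t s)" "norm x = 1" for x
    using C1[of x] C2[of x] that by (auto simp: fs_app)
  then show "form_bounded (form_sum t s)" unfolding form_bounded_def by blast
qed

lemma sum_Vf:
  assumes t: "t \<in> Vf" and s: "s \<in> Vf" and d: "form_bounded t \<or> form_bounded s \<or> dom_form t = dom_form s"
  shows "form_sum t s \<in> Vf"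
proof -
  have Ft: "is_form t" and Fs: "is_form s" using t s Vf_D by blast+
  let ?I = "dom_form t \<inter> dom_form s"
  have cs: "csubspace ?I" using f_sub[OF Ft] f_sub[OF Fs] unfolding csubspace_def by auto
  have dn: "closure ?I = UNIV"
    using d Vf_D(3)[OF t] Vf_D(3)[OF s] f_dense[OF Ft] f_dense[OF Fs] by auto
  have sub: "x + y \<in> ?I" "a *\<^sub>C x \<in> ?I" if "x \<in> ?I" "y \<in> ?I" for x y a
    using cs that unfolding csubspace_def by auto
  have "is_form (form_sum t s)"
    unfolding is_form_def Let_def fs_dom
    using cs dn sub
    by (auto simp: fs_app f_addL[OF Ft] f_addL[OF Fs] f_addR[OF Ft] f_addR[OF Fs]
        f_scL[OF Ft] f_scL[OF Fs] f_scR[OF Ft] f_scR[OF Fs] algebra_simps)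
  moreover have "form_positive (form_sum t s)"
    using pos_Re[OF t] pos_Re[OF s] by (auto simp: form_positive_def fs_app)
  moreover have "dom_form (form_sum t s) = UNIV" if "form_bounded (form_sum t s)"
    using that bnd_sum_iff[OF t s d] Vf_D(3)[OF t] Vf_D(3)[OF s] by auto
  ultimately show ?thesis unfolding Vf_def by blast
qed

lemma zero_Vf: "zero_form \<in> Vf"
  by (auto simp: Vf_def is_form_def csubspace_def form_positive_def)

lemma zero_bnd: "form_bounded zero_form"
  by (auto simp: form_bounded_def)

lemma sum_zero: "t \<in> Vf \<Longrightarrow> form_sum t zero_form = t"
proof -
  assume t: "t \<in> Vf"
  have "form_sum t zero_form \<in> Vf" using sum_Vf[OF t zero_Vf] zero_bnd by blast
  then have "is_form (form_sum t zero_form)" by (rule Vf_D(1))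
  then show ?thesis using Vf_D(1)[OF t] by (intro form_eqI) (auto simp: fs_app)
qed

lemma bnd_transfer:
  assumes "form_bounded y" "y \<in> Vf" "\<And>a. a \<in> dom_form w \<Longrightarrow> app_form w a a = app_form y a a"
  shows "form_bounded w"
proof -
  obtain C where C: "\<And>x. x \<in> dom_form y \<Longrightarrow> norm x = 1 \<Longrightarrow> Re (app_form y x x) \<le> C"
    using assms(1) unfolding form_bounded_def by blast
  have "dom_form y = UNIV" using assms Vf_D by blast
  then show ?thesis using C assms(3) unfolding form_bounded_def by (metis UNIV_I)
qed

lemma cancel:
  assumes x: "x \<in> Vf" and y: "y \<in> Vf" and w: "w \<in> Vf"
    and dy: "form_bounded x \<or> form_bounded y \<or> dom_form x = dom_form y"
    and dw: "form_bounded x \<or> form_bounded w \<or> dom_form x = dom_form w"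
    and eq: "form_sum x y = form_sum x w"
  shows "y = w"
proof -
  have Fy: "is_form y" and Fw: "is_form w" and Fx: "is_form x" using x y w Vf_D by blast+
  have I: "dom_form x \<inter> dom_form y = dom_form x \<inter> dom_form w"
    using arg_cong[OF eq, of dom_form] by simp
  have E: "app_form y a b = app_form w a b" if "a \<in> dom_form x \<inter> dom_form y" "b \<in> dom_form x \<inter> dom_form y" for a b
    using fun_cong[OF fun_cong[OF arg_cong[OF eq, of app_form], of a], of b] that I
    by (auto simp: fs_app)
  have direct: "y = w" if "dom_form y = dom_form w" "dom_form y \<subseteq> dom_form x"
  proof (rule form_eqI[OF Fy Fw])
    fix a b assume "a \<in> dom_form y" "b \<in> dom_form y"
    then show "app_form y a b = app_form w a b" using that by (intro E) auto
  qed (use that in auto)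
  show ?thesis
  proof (cases "form_bounded x")
    case True
    then have "dom_form x = UNIV" using x Vf_D by blast
    then show ?thesis using I direct by auto
  next
    case nx: False
    show ?thesis
    proof (cases "form_bounded y")
      case hy: True
      then have Dy: "dom_form y = UNIV" using y Vf_D by blast
      show ?thesis
      proof (cases "form_bounded w")
        case hw: True
        then have Dw: "dom_form w = UNIV" using w Vf_D by blast
        show ?thesis using dense_eq[OF y w hy hw f_dense[OF Fx]] E Dy by auto
      next
        case hw: False
        then have Dxw: "dom_form x = dom_form w" using dw nx by auto
        have "form_bounded w" using bnd_transfer[OF hy y] E I Dxw Dy by auto
        then show ?thesis using hw by blast
      qed
    next
      case hy: False
      then have Dxy: "dom_form x = dom_form y" using dy nx by auto
      show ?thesis
      proof (cases "form_bounded w")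
        case hw: True
        then have Dw: "dom_form w = UNIV" using w Vf_D by blast
        have "form_bounded y" using bnd_transfer[OF hw w, of y] E I Dxy Dw by auto
        then show ?thesis using hy by blast
      next
        case hw: False
        then have Dxw: "dom_form x = dom_form w" using dw nx by auto
        show ?thesis using direct Dxy Dxw by auto
      qed
    qed
  qed
qed

lemma zero_sum:
  assumes x: "x \<in> Vf" and y: "y \<in> Vf" and eq: "form_sum x y = zero_form"
  shows "x = zero_form"
proof -
  have Fx: "is_form x" using x Vf_D by blast
  have "dom_form x \<inter> dom_form y = UNIV" using arg_cong[OF eq, of dom_form] by simp
  then have Dx: "dom_form x = UNIV" and Dy: "dom_form y = UNIV" by auto
  have s: "app_form x a a + app_form y a a = 0" for a
    using fun_cong[OF fun_cong[OF arg_cong[OF eq, of app_form], of a], of a] Dx Dy by (simp add: fs_app)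
  have z: "app_form x a a = 0" for a
  proof -
    have "Re (app_form x a a) + Re (app_form y a a) = 0" using s[of a] by (metis plus_complex.sel(1) zero_complex.sel(1))
    then have "Re (app_form x a a) = 0" using pos_Re(1)[OF x, of a] pos_Re(1)[OF y, of a] Dx Dy by simp
    then show ?thesis using pos_Re(2)[OF x, of a] Dx by (simp add: complex_eq_iff)
  qed
  have "is_form (zero_form :: 'a cform)" using zero_Vf Vf_D by blast
  then show ?thesis using polar[OF Fx, of zero_form] Dx z Fx by (intro form_eqI) auto
qed

lemma oplus_comm: "Vf_oplus a b = Vf_oplus b a"
  unfolding Vf_oplus_def by (metis fs_comm)

lemma assoc_L:
  assumes x: "x \<in> Vf" and y: "y \<in> Vf"
  shows "Option.bind (Vf_oplus x y) (\<lambda>u. Vf_oplus u w) =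
    (if (form_bounded x \<or> form_bounded y \<or> dom_form x = dom_form y) \<and>
        ((form_bounded x \<and> form_bounded y) \<or> form_bounded w \<or> dom_form x \<inter> dom_form y = dom_form w)
     then Some (form_sum (form_sum x y) w) else None)"
proof (cases "form_bounded x \<or> form_bounded y \<or> dom_form x = dom_form y")
  case True
  then show ?thesis using bnd_sum_iff[OF x y True] by (simp add: Vf_oplus_def)
qed (simp add: Vf_oplus_def)

theorem theorem4p5:
  assumes "infinite_dimensional TYPE('h::chilbert_space)"
  shows "gen_effect_algebra (Vf :: 'h cform set) Vf_oplus zero_form"
  unfolding gen_effect_algebra_def
proof (intro conjI ballI allI impI)
  show "zero_form \<in> (Vf :: 'h cform set)" by (rule zero_Vf)
next
  fix x y :: "'h cform" and u assume x: "x \<in> Vf" and y: "y \<in> Vf" and h: "Vf_oplus x y = Some u"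
  then have c: "form_bounded x \<or> form_bounded y \<or> dom_form x = dom_form y" and "u = form_sum x y"
    by (auto simp: Vf_oplus_def split: if_splits)
  then show "u \<in> Vf" using sum_Vf[OF x y c] by simp
next
  fix x y :: "'h cform" assume "x \<in> Vf" "y \<in> Vf"
  show "Vf_oplus x y = Vf_oplus y x" by (rule oplus_comm)
next
  fix x y w :: "'h cform" assume x: "x \<in> Vf" and y: "y \<in> Vf" and w: "w \<in> Vf"
  have R: "Option.bind (Vf_oplus y w) (Vf_oplus x) =
    (if (form_bounded w \<or> form_bounded y \<or> dom_form w = dom_form y) \<and>
        ((form_bounded w \<and> form_bounded y) \<or> form_bounded x \<or> dom_form w \<inter> dom_form y = dom_form x)
     then Some (form_sum (form_sum w y) x) else None)"
  proof -
    have "Vf_oplus y w = Vf_oplus w y" "\<And>u. Vf_oplus x u = Vf_oplus u x"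
      by (rule oplus_comm)+
    then show ?thesis using assoc_L[OF w y, of x] by (simp add: eq_commute)
  qed
  have S: "form_sum (form_sum w y) x = form_sum (form_sum x y) w"
    by (metis fs_assoc fs_comm)
  have bx: "form_bounded x \<Longrightarrow> dom_form x = UNIV" and by': "form_bounded y \<Longrightarrow> dom_form y = UNIV"
    and bw: "form_bounded w \<Longrightarrow> dom_form w = UNIV" using x y w Vf_D by blast+
  show "Option.bind (Vf_oplus x y) (\<lambda>u. Vf_oplus u w) = Option.bind (Vf_oplus y w) (Vf_oplus x)"
    unfolding assoc_L[OF x y] R S
    using bx by' bw
    by (cases "form_bounded x"; cases "form_bounded y"; cases "form_bounded w") auto
next
  fix x :: "'h cform" assume "x \<in> Vf"
  then show "Vf_oplus x zero_form = Some x" using sum_zero[of x] zero_bnd unfolding Vf_oplus_def by (metis (full_types))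
next
  fix x y w :: "'h cform" assume x: "x \<in> Vf" and y: "y \<in> Vf" and w: "w \<in> Vf"
    and h: "Vf_oplus x y \<noteq> None \<and> Vf_oplus x y = Vf_oplus x w"
  then show "y = w" using cancel[OF x y w]
    by (auto simp: Vf_oplus_def split: if_splits)
next
  fix x y :: "'h cform" assume x: "x \<in> Vf" and y: "y \<in> Vf" and h: "Vf_oplus x y = Some zero_form"
  then have e: "form_sum x y = zero_form" by (auto simp: Vf_oplus_def split: if_splits)
  show "x = zero_form" using zero_sum[OF x y e] .
next
  fix x y :: "'h cform" assume x: "x \<in> Vf" and y: "y \<in> Vf" and h: "Vf_oplus x y = Some zero_form"
  then have "Vf_oplus y x = Some zero_form" using oplus_comm by metis
  then have e: "form_sum y x = zero_form" by (auto simp: Vf_oplus_def split: if_splits)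
  show "y = zero_form" using zero_sum[OF y x e] .
qed

end
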